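(* Let $\alpha=0$ and $\lambda\in\mathbb{N}$. Define functions $g(s;0,\lambda)$ by $g(s;0,0)=0$, $$g(s;0,1)=1-\frac{I_0^2(\sqrt s)}{I_1^2(\sqrt s)},$$ and, for $\lambda\ge1$, the difference equation in $\lambda$ $$\frac{1}{\sqrt{1-g(s;0,\lambda+1)}}+\frac{1}{\sqrt{1-g(s;0,\lambda-1)}}=-\frac{2\lambda\sqrt{1-g(s;0,\lambda)}}{\sqrt s\,g(s;0,\lambda)}.$$ Then for each positive integer $\lambda$, $g(s;0,\lambda)$ is an exact solution of $$\frac{d^2g}{ds^2}=\frac{3g-1}{2g(g-1)}\left(\frac{dg}{ds}\right)^2-\frac1s\frac{dg}{ds}-\frac{\lambda^2(g-1)^2}{2s^2g}+\frac{g}{2s}$$ (i.e. $P_V(0,-\frac{\lambda^2}{2},\frac12,0)$), and $$\mathcal{H}(s;0,\lambda)=\frac{(sg'(s;0,\lambda))^2}{4g(s;0,\lambda)(g(s;0,\lambda)-1)^2}-\frac{\lambda^2}{4g(s;0,\lambda)}+\frac{sg(s;0,\lambda)}{4(g(s;0,\lambda)-1)}$$ is the corresponding solution of $(s\mathcal{H}'')^2=\mathcal{H}'(4\mathcal{H}'-1)(\mathcal{H}-s\mathcal{H}')+\frac1{16}\left[4\lambda\mathcal{H}'-\lambda\right]^2$.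
   Context: $I_k$ denotes the modified Bessel function of the first kind of order $k$. *)

theory Defs
  imports "HOL-Analysis.Analysis"
begin

definition besselI :: "nat \<Rightarrow> real \<Rightarrow> real" where
  "besselI k x = (\<Sum>m. (x / 2) ^ (2 * m + k) / (fact m * fact (m + k)))"

definition hamH :: "(real \<Rightarrow> real) \<Rightarrow> nat \<Rightarrow> real \<Rightarrow> real" where
  "hamH g lam s =
     (s * deriv g s)^2 / (4 * g s * (g s - 1)^2) - (real lam)^2 / (4 * g s)
     + s * g s / (4 * (g s - 1))"

end

theory Submission
  imports Defs
begin


definition c0 :: "nat \<Rightarrow> real" where "c0 n = 1 / (fact n)^2"
definition cG :: "nat \<Rightarrow> real" where "cG n = (if n = 0 then 0 else 1 / (fact (n - 1) * fact n))"
definition F0 :: "real \<Rightarrow> real" where "F0 y = (\<Sum>n. c0 n * y^n)"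
definition F1 :: "real \<Rightarrow> real" where "F1 y = (\<Sum>n. diffs c0 n * y^n)"
definition F1' :: "real \<Rightarrow> real" where "F1' y = (\<Sum>n. diffs (diffs c0) n * y^n)"
definition GG :: "real \<Rightarrow> real" where "GG y = (\<Sum>n. cG n * y^n)"

lemma c0_summable: "summable (\<lambda>n. c0 n * y^n)"
proof (rule summable_comparison_test'[where g="\<lambda>n. inverse (fact n) * \<bar>y\<bar>^n" and N=0])
  show "summable (\<lambda>n. inverse (fact n) * \<bar>y\<bar>^n)" by (rule summable_exp)
  fix n :: nat
  have f1: "(1::real) \<le> fact n" by simp
  have "norm (c0 n * y^n) = \<bar>y\<bar>^n / (fact n * fact n)"
    by (simp add: c0_def power2_eq_square abs_mult power_abs)
  also have "\<dots> \<le> \<bar>y\<bar>^n / fact n"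
    by (rule divide_left_mono) (use f1 in \<open>auto intro: mult_pos_pos\<close>)
  finally show "norm (c0 n * y^n) \<le> inverse (fact n) * \<bar>y\<bar>^n" by (simp add: field_simps)
qed

lemma cG_summable: "summable (\<lambda>n. cG n * y^n)"
proof (rule summable_comparison_test'[where g="\<lambda>n. inverse (fact n) * \<bar>y\<bar>^n" and N=0])
  show "summable (\<lambda>n. inverse (fact n) * \<bar>y\<bar>^n)" by (rule summable_exp)
  fix n :: nat
  have f1: "(1::real) \<le> fact (n-1)" by simp
  show "norm (cG n * y^n) \<le> inverse (fact n) * \<bar>y\<bar>^n"
  proof (cases "n = 0")
    case True then show ?thesis by (simp add: cG_def)
  next
    case False
    have "norm (cG n * y^n) = \<bar>y\<bar>^n / (fact (n-1) * fact n)"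
      using False by (simp add: cG_def abs_mult power_abs)
    also have "\<dots> \<le> \<bar>y\<bar>^n / fact n"
      by (rule divide_left_mono) (use f1 in \<open>auto intro: mult_pos_pos\<close>)
    finally show ?thesis by (simp add: field_simps)
  qed
qed

lemma d1_summable: "summable (\<lambda>n. diffs c0 n * y^n)"
  by (rule termdiff_converges_all) (rule c0_summable)

lemma d2_summable: "summable (\<lambda>n. diffs (diffs c0) n * y^n)"
  by (rule termdiff_converges_all) (rule d1_summable)

lemma F0_deriv: "(F0 has_real_derivative F1 y) (at y)"
  unfolding F0_def F1_def by (rule termdiffs_strong_converges_everywhere) (rule c0_summable)

lemma F1_deriv: "(F1 has_real_derivative F1' y) (at y)"
  unfolding F1_def F1'_def by (rule termdiffs_strong_converges_everywhere) (rule d1_summable)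

lemma fact_Suc_sq: "(fact (Suc n) :: real) = real (Suc n) * fact n"
  by simp

lemma aux1: "(k::real) > 0 \<Longrightarrow> a > 0 \<Longrightarrow> k * (1 / (a * (k * a))) = 1 / a^2"
  by (simp add: power2_eq_square field_simps)
lemma aux2: "(k::real) > 0 \<Longrightarrow> a > 0 \<Longrightarrow> 1 / (a * (k * a)) * (y * y^n) = y * (k * (1 / (k * a)^2) * y^n)"
  by (simp add: power2_eq_square field_simps)
lemma aux3: "(k::real) > 0 \<Longrightarrow> a > 0 \<Longrightarrow> x/2 * z / (a * (k * a)) = x/2 * (k * (1 / (k * a)^2) * z)"
  by (simp add: power2_eq_square field_simps)

lemma diffs_cG: "diffs cG = c0"
proof (rule ext)
  fix n
  have "(fact n :: real) > 0" by simp
  then show "diffs cG n = c0 n"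
    unfolding diffs_def cG_def c0_def fact_Suc_sq by (simp only: aux1 of_nat_0_less_iff zero_less_Suc diff_Suc_1 nat.simps if_False)
qed

lemma GG_deriv: "(GG has_real_derivative F0 y) (at y)"
  unfolding GG_def F0_def using termdiffs_strong_converges_everywhere[of cG y, OF cG_summable]
  by (simp add: diffs_cG)

lemma GG_eq: "GG y = y * F1 y"
proof -
  have "(\<lambda>n. y * (diffs c0 n * y^n)) sums (y * F1 y)"
    unfolding F1_def by (rule sums_mult) (rule summable_sums[OF d1_summable])
  moreover have "(\<lambda>n. cG (Suc n) * y ^ Suc n) = (\<lambda>n. y * (diffs c0 n * y^n))"
  proof (rule ext)
    fix n
    have "(fact n :: real) > 0" by simp
    then show "cG (Suc n) * y ^ Suc n = y * (diffs c0 n * y^n)"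
      unfolding diffs_def cG_def c0_def fact_Suc_sq
      by (simp only: aux2 of_nat_0_less_iff zero_less_Suc diff_Suc_1 nat.simps if_False power_Suc)
  qed
  ultimately have "(\<lambda>n. cG (Suc n) * y ^ Suc n) sums (y * F1 y)" by simp
  then have "(\<lambda>n. cG n * y ^ n) sums (y * F1 y + cG 0 * y^0)"
    by (subst (asm) sums_Suc_iff)
  then show ?thesis unfolding GG_def by (simp add: cG_def sums_iff)
qed

lemma F1_rel: "F1 y + y * F1' y = F0 y"
proof -
  have "((\<lambda>y. y * F1 y) has_real_derivative (1 * F1 y + y * F1' y)) (at y)"
    using DERIV_mult[OF DERIV_ident F1_deriv[of y]] by (simp add: mult.commute)
  moreover have "((\<lambda>y. y * F1 y) has_real_derivative F0 y) (at y)"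
    using GG_deriv by (simp add: GG_eq[abs_def])
  ultimately show ?thesis using DERIV_unique by fastforce
qed

lemma F0_pos: "y > 0 \<Longrightarrow> F0 y > 0"
  unfolding F0_def by (rule suminf_pos2[OF c0_summable, where i=0]) (auto simp: c0_def)

lemma F1_pos: "y > 0 \<Longrightarrow> F1 y > 0"
  unfolding F1_def by (rule suminf_pos2[OF d1_summable, where i=0]) (auto simp: c0_def diffs_def)

lemma pow_half: "(x/2::real) ^ (2 * m) = (x^2/4)^m"
  by (simp add: power_mult power_divide)

lemma besselI0_eq: "besselI 0 x = F0 (x^2/4)"
  unfolding besselI_def F0_def
  by (rule arg_cong[where f=suminf], rule ext)
     (simp add: c0_def pow_half power2_eq_square)

lemma besselI1_eq: "besselI 1 x = x / 2 * F1 (x^2/4)"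
proof -
  have "(\<lambda>m. (x / 2) ^ (2 * m + 1) / (fact m * fact (m + 1))) = (\<lambda>m. x/2 * (diffs c0 m * (x^2/4)^m))"
  proof (rule ext)
    fix m
    have "(fact m :: real) > 0" by simp
    have "(x / 2) ^ (2 * m + 1) = x/2 * (x^2/4)^m" by (simp add: pow_half[symmetric])
    then show "(x / 2) ^ (2 * m + 1) / (fact m * fact (m + 1)) = x/2 * (diffs c0 m * (x^2/4)^m)"
      using \<open>(fact m :: real) > 0\<close>
      unfolding diffs_def c0_def fact_Suc_sq Suc_eq_plus1[symmetric]
      by (simp only: aux3 of_nat_0_less_iff zero_less_Suc)
  qed
  then show ?thesis unfolding besselI_def F1_def
    using suminf_mult[OF d1_summable, of "x/2" "x^2/4"] by simp
qed



lemma alg_step: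
  fixes m b c t :: real
  assumes t: "t > 0" and b1: "1 - b^2 \<noteq> 0" and c1: "1 - c^2 \<noteq> 0"
  defines "a \<equiv> 2 * (m+1) * b/(t * (1-b^2)) - c"
  defines "bd \<equiv> (m+1) * b/(2 * t^2) - (1-b^2) * c/(2 * t)"
  defines "ad \<equiv> m * a/(2 * t^2) - (1-a^2) * b/(2 * t)"
  shows "(2 * (m+1) * bd * (t * (1-b^2)) - 2 * (m+1) * b * ((1-b^2)/(2 * t) - 2 * t * b * bd))/(t * (1-b^2))^2 - ad
     = (m+2) * c/(2 * t^2) - (1-c^2) * (2 * (m+2) * c/(t * (1-c^2)) - b)/(2 * t)"
  using t b1 c1 unfolding a_def bd_def ad_def
  apply (simp add: field_simps)
  apply algebra
  done

lemma alg_step':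
  fixes m b c t :: real
  assumes t: "t > 0" and b1: "1 - b^2 \<noteq> 0" and c1: "1 - c^2 \<noteq> 0"
    and xt: "x = t^2"
    and a: "a = 2 * (m+1) * b/(t * (1-b^2)) - c"
    and bd: "bd = (m+1) * b/(2 * x) - (1-b^2) * c/(2 * t)"
    and ad: "ad = m * a/(2 * x) - (1-a^2) * b/(2 * t)"
    and d: "d = 2 * (m+2) * c/(t * (1-c^2)) - b"
  shows "(2 * (m+1) * bd * (t * (1-b^2)) - 2 * (m+1) * b * ((1-b^2)/(2 * t) - 2 * t * b * bd))/(t * (1-b^2))^2 - ad
     = (m+2) * c/(2 * x) - (1-c^2) * d/(2 * t)"
  using alg_step[OF t b1 c1, of m] unfolding xt a bd ad d xt by simp

lemma alg_base:
  fixes w t x :: real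
  assumes t: "t > 0" and w1: "1 - w^2 \<noteq> 0" and xt: "x = t^2"
  shows "(1 - w^2)/(2 * t) - w/(2 * x) = 1 * w/(2 * x) - (1-w^2) * (2 * 1 * w/(t * (1-w^2)) - 1)/(2 * t)"
  using t w1 unfolding xt by (simp add: field_simps) algebra



lemma alg_ode:
  fixes m w v t x q r G :: real
  assumes t: "t > 0" and w0: "w \<noteq> 0" and q0: "q \<noteq> 0" and r0: "r \<noteq> 0" and xt: "x = t^2"
    and hq: "q = 1 - w^2" and hr: "r = 1 - v^2"
    and hG1: "G - 1 = -1/w^2" and hG: "G = -q/w^2"
  defines "z \<equiv> 2 * (m+1) * v/(t * r) - w"
  defines "Lw \<equiv> m * w/(2 * x) - q * v/(2 * t)"
  defines "Lv \<equiv> (m+1) * v/(2 * x) - r * z/(2 * t)"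
  defines "g1 \<equiv> 2 * Lw/w^3"
  shows "2 * (m * Lw/(2 * x) - m * w/(2 * x^2) + w * Lw * v/t - q * Lv/(2 * t) + q * v/(4 * t^3))/w^3 - 6 * Lw^2/w^4
     = (3 * G-1)/(2 * G * (G-1)) * g1^2 - g1/x - m^2 * (G-1)^2/(2 * x^2 * G) + G/(2 * x)"
  unfolding g1_def Lv_def Lw_def z_def xt hG1
  unfolding hG using t w0 q0 r0
  apply (simp add: field_simps)
  unfolding hq hr
  apply algebra
  done

lemma alg_ham:
  fixes m w v t x q G :: real
  assumes t: "t > 0" and w0: "w \<noteq> 0" and q0: "q \<noteq> 0" and xt: "x = t^2"
    and hq: "q = 1 - w^2" and hG1: "G - 1 = -1/w^2" and hG: "G = -q/w^2"
  defines "Lw \<equiv> m * w/(2 * x) - q * v/(2 * t)"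
  defines "g1 \<equiv> 2 * Lw/w^3"
  shows "(x * g1)^2 / (4 * G * (G - 1)^2) - m^2 / (4 * G) + x * G / (4 * (G - 1))
     = x * q * (1-v^2)/4 + m * t * w * v/2"
  unfolding g1_def Lw_def xt hG1
  unfolding hG using t w0 q0
  apply (simp add: field_simps)
  unfolding hq
  apply algebra
  done

lemma alg_hp:
  fixes m w v t x q r :: real
  assumes t: "t > 0" and r0: "r \<noteq> 0" and xt: "x = t^2" and hq: "q = 1 - w^2" and hr: "r = 1 - v^2"
  defines "z \<equiv> 2 * (m+1) * v/(t * r) - w"
  defines "Lw \<equiv> m * w/(2 * x) - q * v/(2 * t)"
  defines "Lv \<equiv> (m+1) * v/(2 * x) - r * z/(2 * t)"
  shows "q * r/4 + x * (-2 * w * Lw) * r/4 + x * q * (-2 * v * Lv)/4 + m * (1/(2 * t)) * w * v/2 + m * t * (Lw * v+w * Lv)/2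
     = q/4"
  unfolding Lv_def Lw_def z_def xt using t r0
  apply (simp add: field_simps)
  unfolding hq hr
  apply algebra
  done

lemma alg_fin:
  fixes m w v t x :: real
  assumes xt: "x = t^2"
  defines "Lw \<equiv> m * w/(2 * x) - (1-w^2) * v/(2 * t)"
  defines "H \<equiv> x * (1-w^2) * (1-v^2)/4 + m * t * w * v/2"
  defines "Hp \<equiv> (1-w^2)/4"
  defines "Hpp \<equiv> -2 * w * Lw/4"
  assumes t: "t > 0"
  shows "(x * Hpp)^2 = Hp * (4 * Hp-1) * (H-x * Hp) + 1/16 * (4 * m * Hp-m)^2"
  unfolding Hpp_def Hp_def H_def Lw_def xt using t
  apply (simp add: field_simps)
  apply algebra
  done



lemma W_deriv_all:
  fixes W :: "nat \<Rightarrow> real \<Rightarrow> real" and S :: "real set"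
  assumes S: "open S" "S \<subseteq> {0<..}"
    and W0: "\<And>x. x\<in>S \<Longrightarrow> W 0 x = 1"
    and nz: "\<And>n x. x\<in>S \<Longrightarrow> n\<ge>1 \<Longrightarrow> 1 - (W n x)^2 \<noteq> 0"
    and rec: "\<And>n x. x\<in>S \<Longrightarrow> n \<ge> 1 \<Longrightarrow> W (n+1) x = 2 * real n * W n x/(sqrt x * (1-(W n x)^2)) - W (n-1) x"
    and D1: "\<And>x. x\<in>S \<Longrightarrow> (W 1 has_real_derivative ((1 - (W 1 x)^2)/(2 * sqrt x) - W 1 x/(2 * x))) (at x)"
  shows "\<forall>x\<in>S. (W n has_real_derivative (real n * W n x/(2 * x) - (1-(W n x)^2) * W (n+1) x/(2 * sqrt x))) (at x)"
proof -
  define P where "P n \<longleftrightarrow> (\<forall>x\<in>S. (W n has_real_derivative (real n * W n x/(2 * x) - (1-(W n x)^2) * W (n+1) x/(2 * sqrt x))) (at x))" for n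
  have "P n \<and> P (Suc n)" for n
  proof (induction n)
    case 0
    have "P 0" unfolding P_def
    proof
      fix x assume x: "x \<in> S"
      have "((\<lambda>y. 1) has_real_derivative 0) (at x)" by (rule DERIV_const)
      then have "(W 0 has_real_derivative 0) (at x)"
        by (rule has_field_derivative_transform_within_open[OF _ S(1) x]) (simp add: W0)
      then show "(W 0 has_real_derivative (real 0 * W 0 x/(2 * x) - (1-(W 0 x)^2) * W (0+1) x/(2 * sqrt x))) (at x)"
        using W0[OF x] by simp
    qed
    moreover have "P (Suc 0)" unfolding P_def
    proof
      fix x assume x: "x \<in> S"
      have xpos: "x > 0" using x S by auto
      have r: "W 2 x = 2 * 1 * W 1 x/(sqrt x * (1-(W 1 x)^2)) - 1"
        using rec[OF x, of 1] W0[OF x] by (simp add: numeral_2_eq_2)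
      have e: "(1 - (W 1 x)^2)/(2 * sqrt x) - W 1 x/(2 * x) = 1 * W 1 x/(2 * x) - (1-(W 1 x)^2) * (2 * 1 * W 1 x/(sqrt x * (1-(W 1 x)^2)) - 1)/(2 * sqrt x)"
        by (rule alg_base) (use xpos nz[OF x, of 1] in auto)
      show "(W (Suc 0) has_real_derivative (real (Suc 0) * W (Suc 0) x/(2 * x) - (1-(W (Suc 0) x)^2) * W (Suc 0+1) x/(2 * sqrt x))) (at x)"
        using D1[OF x] e r by (simp add: numeral_2_eq_2)
    qed
    ultimately show ?case by simp
  next
    case (Suc n)
    have Pn: "P n" and Pn1: "P (Suc n)" using Suc by auto
    have "P (Suc (Suc n))" unfolding P_def
    proof
      fix x assume x: "x \<in> S"
      have xpos: "x > 0" using x S by auto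
      define b where "b = W (Suc n) x"
      define c where "c = W (Suc (Suc n)) x"
      define t where "t = sqrt x"
      define bd where "bd = real (Suc n) * W (Suc n) x/(2 * x) - (1-(W (Suc n) x)^2) * W (Suc n+1) x/(2 * sqrt x)"
      define ad where "ad = real n * W n x/(2 * x) - (1-(W n x)^2) * W (n+1) x/(2 * sqrt x)"
      have hb: "(W (Suc n) has_real_derivative bd) (at x)" using Pn1 x unfolding P_def bd_def by blast
      have ha: "(W n has_real_derivative ad) (at x)" using Pn x unfolding P_def ad_def by blast
      have tpos: "t > 0" using xpos by (simp add: t_def)
      have b1: "1 - b^2 \<noteq> 0" using nz[OF x, of "Suc n"] by (simp add: b_def)
      have c1: "1 - c^2 \<noteq> 0" using nz[OF x, of "Suc (Suc n)"] by (simp add: c_def)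
      have hs: "(sqrt has_real_derivative inverse (sqrt x) / 2) (at x)"
        by (rule DERIV_real_sqrt[OF xpos])
      have d: "((\<lambda>y. 2 * real (Suc n) * W (Suc n) y/(sqrt y * (1-(W (Suc n) y)^2)) - W n y) has_real_derivative
         (2 * (real n+1) * bd * (t * (1-b^2)) - 2 * (real n+1) * b * ((1-b^2)/(2 * t) - 2 * t * b * bd))/(t * (1-b^2))^2 - ad) (at x)"
        apply (rule DERIV_cong)
         apply (rule hs ha hb | rule derivative_eq_intros refl)+
            apply (use b1 xpos in \<open>simp add: b_def\<close>)
           apply (rule refl)
          apply (rule ha)
         apply (rule refl)
        using tpos b1 unfolding b_def t_def by (simp add: field_simps power2_eq_square)
      have eqf: "\<And>y. y \<in> S \<Longrightarrow> 2 * real (Suc n) * W (Suc n) y/(sqrt y * (1-(W (Suc n) y)^2)) - W n y = W (Suc (Suc n)) y"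
        using rec[of _ "Suc n"] by simp
      have dW: "(W (Suc (Suc n)) has_real_derivative
         (2 * (real n+1) * bd * (t * (1-b^2)) - 2 * (real n+1) * b * ((1-b^2)/(2 * t) - 2 * t * b * bd))/(t * (1-b^2))^2 - ad) (at x)"
        by (rule has_field_derivative_transform_within_open[OF d S(1) x]) (rule eqf)
      have ea: "W n x = 2 * (real n+1) * b/(t * (1-b^2)) - c"
        using eqf[OF x] unfolding b_def c_def t_def by (simp add: algebra_simps)
      have ed: "W (Suc (Suc n)+1) x = 2 * (real n+2) * c/(t * (1-c^2)) - b"
        using rec[OF x, of "Suc (Suc n)"] unfolding b_def c_def t_def by simp
      have key: "(2 * (real n+1) * bd * (t * (1-b^2)) - 2 * (real n+1) * b * ((1-b^2)/(2 * t) - 2 * t * b * bd))/(t * (1-b^2))^2 - ad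
          = (real n+2) * c/(2 * x) - (1-c^2) * W (Suc (Suc n)+1) x/(2 * t)"
        apply (rule alg_step'[OF tpos b1 c1])
        using xpos ea ed unfolding t_def bd_def ad_def b_def c_def by auto
      show "(W (Suc (Suc n)) has_real_derivative (real (Suc (Suc n)) * W (Suc (Suc n)) x/(2 * x) - (1-(W (Suc (Suc n)) x)^2) * W (Suc (Suc n)+1) x/(2 * sqrt x))) (at x)"
        using dW unfolding key by (simp add: c_def t_def add.commute)
    qed
    then show ?case using Suc by auto
  qed
  then show ?thesis unfolding P_def by auto
qed




lemma alg_w1:
  fixes t x p q :: real
  assumes "t > 0" "p > 0" "x = t^2"
  shows "(((inverse t / 2 * 2 - t * 0) / (2 * 2) * q + 4 * (p - q) / x * (1/4) * (t / 2)) * p - t / 2 * q * (q * (1/4))) / (p * p)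
    = (1 - (t / 2 * q / p)^2) / (2 * t) - t / 2 * q / p / (2 * x)"
  using assms by (simp add: field_simps power2_eq_square)

lemma W1_deriv:
  assumes xpos: "x > 0"
  shows "((\<lambda>y. sqrt y / 2 * F1 (y/4) / F0 (y/4)) has_real_derivative
     ((1 - (sqrt x / 2 * F1 (x/4) / F0 (x/4))^2)/(2 * sqrt x) - (sqrt x / 2 * F1 (x/4) / F0 (x/4))/(2 * x))) (at x)"
proof -
  have hl: "((\<lambda>y. y/4) has_real_derivative 1/4) (at x)"
    by (rule derivative_eq_intros refl | simp)+
  have hF0: "((\<lambda>y. F0 (y/4)) has_real_derivative F1 (x/4) * (1/4)) (at x)"
    using DERIV_chain'[OF hl F0_deriv] by simp
  have hF1: "((\<lambda>y. F1 (y/4)) has_real_derivative F1' (x/4) * (1/4)) (at x)"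
    using DERIV_chain'[OF hl F1_deriv] by simp
  have hs: "(sqrt has_real_derivative inverse (sqrt x) / 2) (at x)"
    by (rule DERIV_real_sqrt[OF xpos])
  have p0: "F0 (x/4) > 0" using F0_pos xpos by simp
  have rel: "F1' (x/4) = 4 * (F0 (x/4) - F1 (x/4)) / x"
    using F1_rel[of "x/4"] xpos by (simp add: field_simps)
  show ?thesis
    apply (rule DERIV_cong)
     apply (rule hs hF0 hF1 | rule derivative_eq_intros refl)+
           apply simp
          apply (rule refl)
         apply (rule hF1)
        apply (rule refl)
       apply (rule hF0)
      apply (use p0 in simp)
     apply (rule refl)
    unfolding rel
    apply (rule alg_w1)
    using xpos p0 by auto
qed



theorem theorem9:
  fixes g :: "nat \<Rightarrow> real \<Rightarrow> real" and S :: "real set"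
  assumes S_open: "open S" and S_pos: "S \<subseteq> {0<..}"
    and g0: "\<And>s. s \<in> S \<Longrightarrow> g 0 s = 0"
    and g1: "\<And>s. s \<in> S \<Longrightarrow> g 1 s = 1 - (besselI 0 (sqrt s))^2 / (besselI 1 (sqrt s))^2"
    and wd: "\<And>lam s. s \<in> S \<Longrightarrow> lam \<ge> 1 \<Longrightarrow> g lam s \<noteq> 0 \<and> g lam s < 1"
    and rec: "\<And>lam s. s \<in> S \<Longrightarrow> lam \<ge> 1 \<Longrightarrow>
        1 / sqrt (1 - g (lam + 1) s) + 1 / sqrt (1 - g (lam - 1) s)
          = - (2 * real lam * sqrt (1 - g lam s)) / (sqrt s * g lam s)"
    and lam_pos: "lam \<ge> 1" and s_in: "s \<in> S"
  shows "g lam differentiable (at s) \<and> deriv (g lam) differentiable (at s) \<and>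
         deriv (deriv (g lam)) s =
           (3 * g lam s - 1) / (2 * g lam s * (g lam s - 1)) * (deriv (g lam) s)^2
           - deriv (g lam) s / s
           - (real lam)^2 * (g lam s - 1)^2 / (2 * s^2 * g lam s)
           + g lam s / (2 * s)
       \<and> hamH (g lam) lam differentiable (at s)
       \<and> deriv (hamH (g lam) lam) differentiable (at s)
       \<and> (s * deriv (deriv (hamH (g lam) lam)) s)^2 =
           deriv (hamH (g lam) lam) s * (4 * deriv (hamH (g lam) lam) s - 1)
 * (hamH (g lam) lam s - s * deriv (hamH (g lam) lam) s)
           + 1/16 * (4 * real lam * deriv (hamH (g lam) lam) s - real lam)^2"
proof -
  define W where "W n x = 1 / sqrt (1 - g n x)" for n x
  have xpos: "\<And>x. x \<in> S \<Longrightarrow> x > 0" using S_pos by auto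
  have glt: "\<And>n x. x \<in> S \<Longrightarrow> g n x < 1"
    by (metis g0 le_add1 less_numeral_extra(1) plus_1_eq_Suc wd not0_implies_Suc)
  have W0: "\<And>x. x \<in> S \<Longrightarrow> W 0 x = 1" by (simp add: W_def g0)
  have Wpos: "\<And>n x. x \<in> S \<Longrightarrow> W n x > 0"
    using glt unfolding W_def by simp
  have W2: "\<And>n x. x \<in> S \<Longrightarrow> (W n x)^2 = 1 / (1 - g n x)"
  proof -
    fix n :: nat and x assume x: "x \<in> S"
    have "g n x \<le> 1" using glt[OF x, of n] by simp
    then show "(W n x)^2 = 1 / (1 - g n x)" unfolding W_def by (simp add: power_divide)
  qed
  have gW: "\<And>n x. x \<in> S \<Longrightarrow> g n x = 1 - 1/(W n x)^2"
    using W2 glt by (simp add: field_simps)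
  have nz: "\<And>n x. x \<in> S \<Longrightarrow> n \<ge> 1 \<Longrightarrow> 1 - (W n x)^2 \<noteq> 0"
  proof -
    fix n :: nat and x assume x: "x \<in> S" and n: "n \<ge> 1"
    have "g n x \<noteq> 0" using wd[OF x n] by simp
    moreover have "g n x = 1 - 1/(W n x)^2" by (rule gW[OF x])
    ultimately show "1 - (W n x)^2 \<noteq> 0" by auto
  qed
  have recW: "\<And>n x. x \<in> S \<Longrightarrow> n \<ge> 1 \<Longrightarrow> W (n+1) x = 2 * real n * W n x/(sqrt x * (1-(W n x)^2)) - W (n-1) x"
  proof -
    fix n :: nat and x assume x: "x \<in> S" and n: "n \<ge> 1"
    define r where "r = sqrt (1 - g n x)"
    have r0: "r > 0" using glt[OF x, of n] by (simp add: r_def)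
    have r2: "r^2 = 1 - g n x" using glt[OF x, of n] by (simp add: r_def)
    have gn: "g n x \<noteq> 0" using wd[OF x n] by simp
    have t0: "sqrt x > 0" using xpos[OF x] by simp
    have e: "W (n+1) x + W (n-1) x = - (2 * real n * r) / (sqrt x * g n x)"
      using rec[OF x n] by (simp add: W_def r_def)
    have gg: "g n x = 1 - r^2" using r2 by simp
    have "2 * real n * W n x/(sqrt x * (1-(W n x)^2)) = - (2 * real n * r) / (sqrt x * g n x)"
      unfolding W_def r_def[symmetric] gg using r0 t0 gn[unfolded gg]
      by (simp add: field_simps power2_eq_square)
    then show "W (n+1) x = 2 * real n * W n x/(sqrt x * (1-(W n x)^2)) - W (n-1) x"
      using e by simp
  qed
  have W1eq: "\<And>x. x \<in> S \<Longrightarrow> W 1 x = sqrt x / 2 * F1 (x/4) / F0 (x/4)"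
  proof -
    fix x assume x: "x \<in> S"
    have x0: "x > 0" using xpos[OF x] .
    have I0: "besselI 0 (sqrt x) = F0 (x/4)" using x0 by (simp add: besselI0_eq)
    have I1: "besselI 1 (sqrt x) = sqrt x / 2 * F1 (x/4)" using x0 besselI1_eq[of "sqrt x"] by simp
    have p: "F0 (x/4) > 0" using F0_pos x0 by simp
    have q: "F1 (x/4) > 0" using F1_pos x0 by simp
    have qq: "sqrt x / 2 * F1 (x/4) > 0" using q x0 by simp
    have "1 - g 1 x = (F0 (x/4))^2 / (sqrt x / 2 * F1 (x/4))^2"
      using g1[OF x] unfolding I0 I1 by simp
    then have "sqrt (1 - g 1 x) = F0 (x/4) / (sqrt x / 2 * F1 (x/4))"
      using p qq by (simp add: real_sqrt_divide)
    then show "W 1 x = sqrt x / 2 * F1 (x/4) / F0 (x/4)"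
      unfolding W_def by simp
  qed
  have D1: "\<And>x. x\<in>S \<Longrightarrow> (W 1 has_real_derivative ((1 - (W 1 x)^2)/(2 * sqrt x) - W 1 x/(2 * x))) (at x)"
  proof -
    fix x assume x: "x \<in> S"
    show "(W 1 has_real_derivative ((1 - (W 1 x)^2)/(2 * sqrt x) - W 1 x/(2 * x))) (at x)"
      unfolding W1eq[OF x]
      by (rule has_field_derivative_transform_within_open[OF W1_deriv[OF xpos[OF x]] S_open x])
         (simp add: W1eq[simplified])
  qed
  define L where "L k x = real k * W k x/(2 * x) - (1-(W k x)^2) * W (k+1) x/(2 * sqrt x)" for k x
  have DW: "\<And>k x. x \<in> S \<Longrightarrow> (W k has_real_derivative L k x) (at x)"
    using W_deriv_all[OF S_open S_pos W0 nz recW D1] unfolding L_def by blast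
  have Dg: "\<And>x. x \<in> S \<Longrightarrow> (g lam has_real_derivative 2 * L lam x / (W lam x)^3) (at x)"
  proof -
    fix x assume x: "x \<in> S"
    have hW: "(W lam has_real_derivative L lam x) (at x)" by (rule DW[OF x])
    have w0: "W lam x \<noteq> 0" using Wpos[OF x, of lam] by simp
    have "((\<lambda>y. 1 - 1/(W lam y)^2) has_real_derivative 2 * L lam x / (W lam x)^3) (at x)"
      apply (rule DERIV_cong)
       apply (rule hW | rule derivative_eq_intros refl)+
         apply (use w0 in simp)
        apply (rule refl)
       apply (rule refl)
      using w0 by (simp add: field_simps power2_eq_square power3_eq_cube)
    then show "(g lam has_real_derivative 2 * L lam x / (W lam x)^3) (at x)"
      by (rule has_field_derivative_transform_within_open[OF _ S_open x]) (simp add: gW)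
  qed
  define w where "w = W lam s"
  define v where "v = W (lam+1) s"
  define t where "t = sqrt s"
  have s0: "s > 0" using xpos[OF s_in] .
  have t0: "t > 0" using s0 by (simp add: t_def)
  have st: "s = t^2" using s0 by (simp add: t_def)
  have w0: "w \<noteq> 0" using Wpos[OF s_in, of lam] by (simp add: w_def)
  have q0: "1 - w^2 \<noteq> 0" using nz[OF s_in lam_pos] by (simp add: w_def)
  have r0: "1 - v^2 \<noteq> 0" using nz[OF s_in, of "lam+1"] by (simp add: v_def)
  have hW: "(W lam has_real_derivative L lam s) (at s)" by (rule DW[OF s_in])
  have hV: "(W (lam+1) has_real_derivative L (lam+1) s) (at s)" by (rule DW[OF s_in])
  have hs: "(sqrt has_real_derivative inverse (sqrt s) / 2) (at s)"
    by (rule DERIV_real_sqrt[OF s0])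
  define Lw where "Lw = L lam s"
  define Lv where "Lv = L (lam+1) s"
  have hLw: "Lw = real lam * w/(2 * t^2) - (1 - w^2) * v/(2 * t)"
    unfolding Lw_def L_def w_def v_def t_def using s0 by simp
  have hLv: "Lv = real (lam+1) * v/(2 * t^2) - (1 - v^2) * W (lam+2) s/(2 * t)"
    unfolding Lv_def L_def w_def v_def t_def using s0 by simp
  define G2 where "G2 = 2 * (real lam * Lw/(2 * s) - real lam * w/(2 * s^2) + w * Lw * v/t - (1-w^2) * Lv/(2 * t) + (1-w^2) * v/(4 * t^3))/w^3 - 6 * Lw^2/w^4"
  have dG1: "((\<lambda>y. 2 * L lam y / (W lam y)^3) has_real_derivative G2) (at s)"
    unfolding L_def[abs_def]
    apply (rule DERIV_cong)
     apply (rule hW hV hs | rule derivative_eq_intros refl | use s0 w0 in \<open>simp add: w_def; fail\<close>)+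
    unfolding Lw_def[symmetric] Lv_def[symmetric] w_def[symmetric] v_def[symmetric] t_def[symmetric] G2_def
    unfolding st hLw using t0 w0
    apply (simp add: field_simps)
    apply algebra
    done
  have derivg: "\<And>y. y \<in> S \<Longrightarrow> deriv (g lam) y = 2 * L lam y / (W lam y)^3"
    using Dg DERIV_imp_deriv by blast
  have dG: "(deriv (g lam) has_real_derivative G2) (at s)"
    by (rule has_field_derivative_transform_within_open[OF dG1 S_open s_in]) (simp add: derivg)
  have ddg: "deriv (deriv (g lam)) s = G2" using DERIV_imp_deriv[OF dG] .
  have dgs: "deriv (g lam) s = 2 * Lw / w^3" using derivg[OF s_in] by (simp add: Lw_def w_def)
  have hLw': "Lw = real lam * w/(2 * s) - (1 - w^2) * v/(2 * t)"
    unfolding hLw st ..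
  have hz: "W (lam+2) s = 2 * (real lam + 1) * v/(t * (1 - v^2)) - w"
    using recW[OF s_in, of "lam+1"] unfolding v_def w_def t_def by (simp add: add.commute)
  have hLv': "Lv = (real lam + 1) * v/(2 * s) - (1 - v^2) * (2 * (real lam + 1) * v/(t * (1 - v^2)) - w)/(2 * t)"
    using hLv hz by (simp add: st)
  have hG1: "g lam s - 1 = -1/w^2" using gW[OF s_in, of lam] by (simp add: w_def)
  have hG: "g lam s = -(1 - w^2)/w^2" using gW[OF s_in, of lam] w0 by (simp add: w_def field_simps)
  have ode: "G2 = (3 * g lam s - 1) / (2 * g lam s * (g lam s - 1)) * (2 * Lw / w^3)^2
           - (2 * Lw / w^3) / s - (real lam)^2 * (g lam s - 1)^2 / (2 * s^2 * g lam s) + g lam s / (2 * s)"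
    unfolding G2_def hLw' hLv'
    by (rule alg_ode[OF t0 w0 q0 r0 st refl refl hG1 hG])
  define Hx where "Hx y = y * (1 - (W lam y)^2) * (1 - (W (lam+1) y)^2)/4 + real lam * sqrt y * W lam y * W (lam+1) y / 2" for y
  have hamEq: "hamH (g lam) lam y = Hx y" if y: "y \<in> S" for y
  proof -
    have y0: "y > 0" using xpos[OF y] .
    have ty: "sqrt y > 0" using y0 by simp
    have sy: "y = (sqrt y)^2" using y0 by simp
    have wy0: "W lam y \<noteq> 0" using Wpos[OF y, of lam] by simp
    have qy: "1 - (W lam y)^2 \<noteq> 0" using nz[OF y lam_pos] .
    have hG1: "g lam y - 1 = -1/(W lam y)^2" using gW[OF y, of lam] by simp
    have hG: "g lam y = -(1 - (W lam y)^2)/(W lam y)^2" using gW[OF y, of lam] wy0 by (simp add: field_simps)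
    show ?thesis
      unfolding hamH_def derivg[OF y] L_def Hx_def
      by (rule alg_ham[OF ty wy0 qy sy refl hG1 hG])
  qed
  have dHx: "(Hx has_real_derivative (1 - (W lam y)^2)/4) (at y)" if y: "y \<in> S" for y
  proof -
    have y0: "y > 0" using xpos[OF y] .
    have ty: "sqrt y > 0" using y0 by simp
    have sy: "y = (sqrt y)^2" using y0 by simp
    have ry: "1 - (W (lam+1) y)^2 \<noteq> 0" using nz[OF y, of "lam+1"] by simp
    have hWy: "(W lam has_real_derivative L lam y) (at y)" by (rule DW[OF y])
    have hVy: "(W (lam+1) has_real_derivative L (lam+1) y) (at y)" by (rule DW[OF y])
    have hsy: "(sqrt has_real_derivative inverse (sqrt y) / 2) (at y)"
      by (rule DERIV_real_sqrt[OF y0])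
    have hz: "W (lam+2) y = 2 * (real lam + 1) * W (lam+1) y/(sqrt y * (1 - (W (lam+1) y)^2)) - W lam y"
      using recW[OF y, of "lam+1"] by (simp add: add.commute)
    have e1: "(1 - (W lam y)^2) * (1 - (W (lam+1) y)^2)/4 + y * (-2 * W lam y * L lam y) * (1 - (W (lam+1) y)^2)/4
       + y * (1 - (W lam y)^2) * (-2 * W (lam+1) y * L (lam+1) y)/4 + real lam * (1/(2 * sqrt y)) * W lam y * W (lam+1) y/2
       + real lam * sqrt y * (L lam y * W (lam+1) y + W lam y * L (lam+1) y)/2 = (1 - (W lam y)^2)/4"
      unfolding L_def
      using alg_hp[OF ty ry sy refl refl, where m="real lam" and w="W lam y"] hz
      by (simp add: add.commute)
    show ?thesis
      unfolding Hx_def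
      apply (rule DERIV_cong)
       apply (rule hWy hVy hsy | rule derivative_eq_intros refl | use y0 in \<open>simp; fail\<close>)+
      unfolding e1[symmetric] using ty
      by (simp add: field_simps)
  qed
  have dH: "(hamH (g lam) lam has_real_derivative (1 - (W lam y)^2)/4) (at y)" if y: "y \<in> S" for y
    by (rule has_field_derivative_transform_within_open[OF dHx[OF y] S_open y]) (simp add: hamEq)
  have derivH: "\<And>y. y \<in> S \<Longrightarrow> deriv (hamH (g lam) lam) y = (1 - (W lam y)^2)/4"
    using dH DERIV_imp_deriv by blast
  have dHp0: "((\<lambda>y. (1 - (W lam y)^2)/4) has_real_derivative -2 * w * Lw / 4) (at s)"
    apply (rule DERIV_cong)
     apply (rule hW | rule derivative_eq_intros refl)+
      apply simp
     apply (rule refl)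
    unfolding w_def Lw_def by simp
  have dHp: "(deriv (hamH (g lam) lam) has_real_derivative -2 * w * Lw / 4) (at s)"
    by (rule has_field_derivative_transform_within_open[OF dHp0 S_open s_in]) (simp add: derivH)
  have ddH: "deriv (deriv (hamH (g lam) lam)) s = -2 * w * Lw / 4" using DERIV_imp_deriv[OF dHp] .
  have dHs: "deriv (hamH (g lam) lam) s = (1 - w^2)/4" using derivH[OF s_in] by (simp add: w_def)
  have Hs: "hamH (g lam) lam s = s * (1 - w^2) * (1 - v^2)/4 + real lam * t * w * v / 2"
    using hamEq[OF s_in] by (simp add: Hx_def w_def v_def t_def)
  have fin: "(s * deriv (deriv (hamH (g lam) lam)) s)^2 =
           deriv (hamH (g lam) lam) s * (4 * deriv (hamH (g lam) lam) s - 1)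
 * (hamH (g lam) lam s - s * deriv (hamH (g lam) lam) s)
           + 1/16 * (4 * real lam * deriv (hamH (g lam) lam) s - real lam)^2"
    unfolding ddH dHs Hs hLw'
    by (rule alg_fin[OF st t0])
  have dif1: "g lam differentiable (at s)"
    by (rule differentiableI[OF has_field_derivative_imp_has_derivative[OF Dg[OF s_in]]])
  have dif2: "deriv (g lam) differentiable (at s)"
    by (rule differentiableI[OF has_field_derivative_imp_has_derivative[OF dG]])
  have dif3: "hamH (g lam) lam differentiable (at s)"
    by (rule differentiableI[OF has_field_derivative_imp_has_derivative[OF dH[OF s_in]]])
  have dif4: "deriv (hamH (g lam) lam) differentiable (at s)"
    by (rule differentiableI[OF has_field_derivative_imp_has_derivative[OF dHp]])
  show ?thesis
    using dif1 dif2 dif3 dif4 fin ode unfolding ddg dgs by simp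
qed

end
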